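(* Let $S^0$ be a quasi-ideal adequate transversal of an abundant semigroup $S$. Then there exist a left adequate semigroup $L$ and a right adequate semigroup $R$ (namely the subsemigroups $L=\{x\in S:f_x=f_{\bar x}\}$ and $R=\{x\in S:e_x=e_{\bar x}\}$ of $S$) such that $S\cong T$, where $T=\{(x,a)\in L\times R:\bar x=\bar a\}$ with multiplication $(x,a)(y,b)=(e_xay,\,ayf_b)$ (products in $S$), and such that $T$ contains a quasi-ideal adequate transversal $T^0\cong S^0$.
   Context: For a semigroup $S$, $\mathcal{R}^\ast=\{(a,b): \text{for all } x,y\in S^1,\ xa=ya \iff xb=yb\}$ and $\mathcal{L}^\ast$ dually. $S$ is abundant if every $\mathcal{R}^\ast$-class and $\mathcal{L}^\ast$-class contains an idempotent; adequate if abundant with commuting idempotents; left (resp. right) adequate if abundant and every $\mathcal{R}^\ast$-class (resp. $\mathcal{L}^\ast$-class) contains a unique idempotent. In an adequate semigroup $a^+,a^\ast$ are the unique idempotents $\mathcal{R}^\ast$-, resp. $\mathcal{L}^\ast$-related to $a$. A subsemigroup $U$ of abundant $S$ is a $\ast$-subsemigroup if $U$ is abundant and $\mathcal{L}^\ast_U=\mathcal{L}^\ast_S\cap(U\times U)$, $\mathcal{R}^\ast_U=\mathcal{R}^\ast_S\cap(U\times U)$. An adequate $\ast$-subsemigroup $S^0$ of abundant $S$ is an adequate transversal if for each $x\in S$ there is a unique $\bar x\in S^0$ and idempotents $e,f$ of $S$ with $x=e\bar xf$, $e\,\mathcal{L}\,\bar x^+$, $f\,\mathcal{R}\,\bar x^\ast$;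 these $e,f$ are unique and denoted $e_x,f_x$. It is a quasi-ideal adequate transversal if moreover $S^0SS^0\subseteq S^0$. *)

theory Defs
  imports Main
begin

definition sgrp :: "'a set \<Rightarrow> ('a \<Rightarrow> 'a \<Rightarrow> 'a) \<Rightarrow> bool" where
  "sgrp S m \<longleftrightarrow> (\<forall>x\<in>S. \<forall>y\<in>S. m x y \<in> S) \<and>
     (\<forall>x\<in>S. \<forall>y\<in>S. \<forall>z\<in>S. m (m x y) z = m x (m y z))"

text \<open>Elements of S^1: None is the adjoined identity.\<close>
definition one_adj :: "'a set \<Rightarrow> 'a option set" where
  "one_adj S = insert None (Some ` S)"

fun lmul :: "('a \<Rightarrow> 'a \<Rightarrow> 'a) \<Rightarrow> 'a option \<Rightarrow> 'a \<Rightarrow> 'a" where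
  "lmul m None a = a"
| "lmul m (Some x) a = m x a"

fun rmul :: "('a \<Rightarrow> 'a \<Rightarrow> 'a) \<Rightarrow> 'a \<Rightarrow> 'a option \<Rightarrow> 'a" where
  "rmul m a None = a"
| "rmul m a (Some x) = m a x"

definition Rstar :: "'a set \<Rightarrow> ('a \<Rightarrow> 'a \<Rightarrow> 'a) \<Rightarrow> 'a \<Rightarrow> 'a \<Rightarrow> bool" where
  "Rstar S m a b \<longleftrightarrow> a \<in> S \<and> b \<in> S \<and>
     (\<forall>x\<in>one_adj S. \<forall>y\<in>one_adj S. lmul m x a = lmul m y a \<longleftrightarrow> lmul m x b = lmul m y b)"

definition Lstar :: "'a set \<Rightarrow> ('a \<Rightarrow> 'a \<Rightarrow> 'a) \<Rightarrow> 'a \<Rightarrow> 'a \<Rightarrow> bool" where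
  "Lstar S m a b \<longleftrightarrow> a \<in> S \<and> b \<in> S \<and>
     (\<forall>x\<in>one_adj S. \<forall>y\<in>one_adj S. rmul m a x = rmul m a y \<longleftrightarrow> rmul m b x = rmul m b y)"

definition GreenL :: "'a set \<Rightarrow> ('a \<Rightarrow> 'a \<Rightarrow> 'a) \<Rightarrow> 'a \<Rightarrow> 'a \<Rightarrow> bool" where
  "GreenL S m a b \<longleftrightarrow> a \<in> S \<and> b \<in> S \<and>
     (\<lambda>x. lmul m x a) ` one_adj S = (\<lambda>x. lmul m x b) ` one_adj S"

definition GreenR :: "'a set \<Rightarrow> ('a \<Rightarrow> 'a \<Rightarrow> 'a) \<Rightarrow> 'a \<Rightarrow> 'a \<Rightarrow> bool" where
  "GreenR S m a b \<longleftrightarrow> a \<in> S \<and> b \<in> S \<and>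
     (\<lambda>x. rmul m a x) ` one_adj S = (\<lambda>x. rmul m b x) ` one_adj S"

definition idems :: "'a set \<Rightarrow> ('a \<Rightarrow> 'a \<Rightarrow> 'a) \<Rightarrow> 'a set" where
  "idems S m = {e \<in> S. m e e = e}"

definition abundant :: "'a set \<Rightarrow> ('a \<Rightarrow> 'a \<Rightarrow> 'a) \<Rightarrow> bool" where
  "abundant S m \<longleftrightarrow> sgrp S m \<and>
     (\<forall>a\<in>S. (\<exists>e\<in>idems S m. Rstar S m a e) \<and> (\<exists>f\<in>idems S m. Lstar S m a f))"

definition adequate :: "'a set \<Rightarrow> ('a \<Rightarrow> 'a \<Rightarrow> 'a) \<Rightarrow> bool" where
  "adequate S m \<longleftrightarrow> abundant S m \<and>
     (\<forall>e\<in>idems S m. \<forall>f\<in>idems S m. m e f = m f e)"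

definition left_adequate :: "'a set \<Rightarrow> ('a \<Rightarrow> 'a \<Rightarrow> 'a) \<Rightarrow> bool" where
  "left_adequate S m \<longleftrightarrow> abundant S m \<and>
     (\<forall>a\<in>S. \<exists>!e. e \<in> idems S m \<and> Rstar S m a e)"

definition right_adequate :: "'a set \<Rightarrow> ('a \<Rightarrow> 'a \<Rightarrow> 'a) \<Rightarrow> bool" where
  "right_adequate S m \<longleftrightarrow> abundant S m \<and>
     (\<forall>a\<in>S. \<exists>!e. e \<in> idems S m \<and> Lstar S m a e)"

definition plus :: "'a set \<Rightarrow> ('a \<Rightarrow> 'a \<Rightarrow> 'a) \<Rightarrow> 'a \<Rightarrow> 'a" where
  "plus U m a = (THE e. e \<in> idems U m \<and> Rstar U m a e)"

definition astar :: "'a set \<Rightarrow> ('a \<Rightarrow> 'a \<Rightarrow> 'a) \<Rightarrow> 'a \<Rightarrow> 'a" where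
  "astar U m a = (THE e. e \<in> idems U m \<and> Lstar U m a e)"

definition star_subsemigroup :: "'a set \<Rightarrow> 'a set \<Rightarrow> ('a \<Rightarrow> 'a \<Rightarrow> 'a) \<Rightarrow> bool" where
  "star_subsemigroup U S m \<longleftrightarrow> U \<subseteq> S \<and> abundant U m \<and>
     (\<forall>a\<in>U. \<forall>b\<in>U. Lstar U m a b \<longleftrightarrow> Lstar S m a b) \<and>
     (\<forall>a\<in>U. \<forall>b\<in>U. Rstar U m a b \<longleftrightarrow> Rstar S m a b)"

definition decomp :: "'a set \<Rightarrow> 'a set \<Rightarrow> ('a \<Rightarrow> 'a \<Rightarrow> 'a) \<Rightarrow> 'a \<Rightarrow> 'a \<Rightarrow> 'a \<Rightarrow> 'a \<Rightarrow> bool" where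
  "decomp S0 S m x xb e f \<longleftrightarrow> xb \<in> S0 \<and> e \<in> idems S m \<and> f \<in> idems S m \<and>
     x = m (m e xb) f \<and> GreenL S m e (plus S0 m xb) \<and> GreenR S m f (astar S0 m xb)"

definition adequate_transversal :: "'a set \<Rightarrow> 'a set \<Rightarrow> ('a \<Rightarrow> 'a \<Rightarrow> 'a) \<Rightarrow> bool" where
  "adequate_transversal S0 S m \<longleftrightarrow> abundant S m \<and> adequate S0 m \<and> star_subsemigroup S0 S m \<and>
     (\<forall>x\<in>S. \<exists>!xb. \<exists>e f. decomp S0 S m x xb e f)"

definition qi_adequate_transversal :: "'a set \<Rightarrow> 'a set \<Rightarrow> ('a \<Rightarrow> 'a \<Rightarrow> 'a) \<Rightarrow> bool" where
  "qi_adequate_transversal S0 S m \<longleftrightarrow> adequate_transversal S0 S m \<and>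
     (\<forall>a\<in>S0. \<forall>s\<in>S. \<forall>b\<in>S0. m (m a s) b \<in> S0)"

definition tbar :: "'a set \<Rightarrow> 'a set \<Rightarrow> ('a \<Rightarrow> 'a \<Rightarrow> 'a) \<Rightarrow> 'a \<Rightarrow> 'a" where
  "tbar S0 S m x = (THE xb. \<exists>e f. decomp S0 S m x xb e f)"

definition te :: "'a set \<Rightarrow> 'a set \<Rightarrow> ('a \<Rightarrow> 'a \<Rightarrow> 'a) \<Rightarrow> 'a \<Rightarrow> 'a" where
  "te S0 S m x = (THE e. \<exists>f. decomp S0 S m x (tbar S0 S m x) e f)"

definition tf :: "'a set \<Rightarrow> 'a set \<Rightarrow> ('a \<Rightarrow> 'a \<Rightarrow> 'a) \<Rightarrow> 'a \<Rightarrow> 'a" where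
  "tf S0 S m x = (THE f. \<exists>e. decomp S0 S m x (tbar S0 S m x) e f)"

definition sgrp_iso :: "('a \<Rightarrow> 'b) \<Rightarrow> 'a set \<Rightarrow> ('a \<Rightarrow> 'a \<Rightarrow> 'a) \<Rightarrow> 'b set \<Rightarrow> ('b \<Rightarrow> 'b \<Rightarrow> 'b) \<Rightarrow> bool" where
  "sgrp_iso \<phi> S m T n \<longleftrightarrow> bij_betw \<phi> S T \<and> (\<forall>x\<in>S. \<forall>y\<in>S. \<phi> (m x y) = n (\<phi> x) (\<phi> y))"

end

theory Submission
  imports Defs
begin


lemma None_in[simp]: "None \<in> one_adj S" by (simp add: one_adj_def)
lemma Some_in[simp]: "(Some x \<in> one_adj S) = (x \<in> S)" by (auto simp: one_adj_def)

lemma one_adj_mono: "U \<subseteq> S \<Longrightarrow> s \<in> one_adj U \<Longrightarrow> s \<in> one_adj S"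
  by (auto simp: one_adj_def)

lemma sgrp_cl: "sgrp S m \<Longrightarrow> x \<in> S \<Longrightarrow> y \<in> S \<Longrightarrow> m x y \<in> S"
  by (simp add: sgrp_def)
lemma sgrp_as: "sgrp S m \<Longrightarrow> x \<in> S \<Longrightarrow> y \<in> S \<Longrightarrow> z \<in> S \<Longrightarrow> m (m x y) z = m x (m y z)"
  by (simp add: sgrp_def)

lemma lmul_in: "sgrp S m \<Longrightarrow> s \<in> one_adj S \<Longrightarrow> a \<in> S \<Longrightarrow> lmul m s a \<in> S"
  by (cases s) (auto simp: sgrp_def)
lemma rmul_in: "sgrp S m \<Longrightarrow> s \<in> one_adj S \<Longrightarrow> a \<in> S \<Longrightarrow> rmul m a s \<in> S"
  by (cases s) (auto simp: sgrp_def)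
lemma lmul_assoc: "sgrp S m \<Longrightarrow> s \<in> one_adj S \<Longrightarrow> a \<in> S \<Longrightarrow> b \<in> S \<Longrightarrow>
   lmul m s (m a b) = m (lmul m s a) b"
  by (cases s) (auto simp: sgrp_def)
lemma rmul_assoc: "sgrp S m \<Longrightarrow> s \<in> one_adj S \<Longrightarrow> a \<in> S \<Longrightarrow> b \<in> S \<Longrightarrow>
   rmul m (m a b) s = m a (rmul m b s)"
  by (cases s) (auto simp: sgrp_def)

lemma Rstar_in: "Rstar U m a b \<Longrightarrow> a \<in> U \<and> b \<in> U" by (simp add: Rstar_def)
lemma Lstar_in: "Lstar U m a b \<Longrightarrow> a \<in> U \<and> b \<in> U" by (simp add: Lstar_def)

lemma Rstar_cancel: "Rstar U m a b \<Longrightarrow> s \<in> one_adj U \<Longrightarrow> t \<in> one_adj U \<Longrightarrow>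
   lmul m s a = lmul m t a \<Longrightarrow> lmul m s b = lmul m t b"
  by (simp add: Rstar_def)
lemma Lstar_cancel: "Lstar U m a b \<Longrightarrow> s \<in> one_adj U \<Longrightarrow> t \<in> one_adj U \<Longrightarrow>
   rmul m a s = rmul m a t \<Longrightarrow> rmul m b s = rmul m b t"
  by (simp add: Lstar_def)

lemma Rstar_refl: "a \<in> U \<Longrightarrow> Rstar U m a a" by (simp add: Rstar_def)
lemma Rstar_sym: "Rstar U m a b \<Longrightarrow> Rstar U m b a" by (simp add: Rstar_def)
lemma Rstar_trans: "Rstar U m a b \<Longrightarrow> Rstar U m b c \<Longrightarrow> Rstar U m a c" by (simp add: Rstar_def)
lemma Lstar_refl: "a \<in> U \<Longrightarrow> Lstar U m a a" by (simp add: Lstar_def)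
lemma Lstar_sym: "Lstar U m a b \<Longrightarrow> Lstar U m b a" by (simp add: Lstar_def)
lemma Lstar_trans: "Lstar U m a b \<Longrightarrow> Lstar U m b c \<Longrightarrow> Lstar U m a c" by (simp add: Lstar_def)

lemma Rstar_restrict: "Rstar S m a b \<Longrightarrow> U \<subseteq> S \<Longrightarrow> a \<in> U \<Longrightarrow> b \<in> U \<Longrightarrow> Rstar U m a b"
  unfolding Rstar_def using one_adj_mono by blast
lemma Lstar_restrict: "Lstar S m a b \<Longrightarrow> U \<subseteq> S \<Longrightarrow> a \<in> U \<Longrightarrow> b \<in> U \<Longrightarrow> Lstar U m a b"
  unfolding Lstar_def using one_adj_mono by blast

lemma idems_D: "e \<in> idems U m \<Longrightarrow> e \<in> U \<and> m e e = e" by (simp add: idems_def)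

lemma Rstar_idem: "Rstar U m a e \<Longrightarrow> e \<in> idems U m \<Longrightarrow> m e a = a"
proof -
  assume r: "Rstar U m a e" and e: "e \<in> idems U m"
  have "lmul m (Some e) e = lmul m None e" using e by (simp add: idems_def)
  moreover have "Rstar U m e a" using r by (rule Rstar_sym)
  ultimately have "lmul m (Some e) a = lmul m None a"
    using Rstar_cancel[of U m e a "Some e" None] e by (simp add: idems_def)
  thus ?thesis by simp
qed

lemma Lstar_idem: "Lstar U m a e \<Longrightarrow> e \<in> idems U m \<Longrightarrow> m a e = a"
proof -
  assume r: "Lstar U m a e" and e: "e \<in> idems U m"
  have "rmul m e (Some e) = rmul m e None" using e by (simp add: idems_def)
  moreover have "Lstar U m e a" using r by (rule Lstar_sym)
  ultimately have "rmul m a (Some e) = rmul m a None"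
    using Lstar_cancel[of U m e a "Some e" None] e by (simp add: idems_def)
  thus ?thesis by simp
qed

lemma GreenL_char: "sgrp S m \<Longrightarrow> e \<in> idems S m \<Longrightarrow> g \<in> idems S m \<Longrightarrow>
   GreenL S m e g \<longleftrightarrow> m e g = e \<and> m g e = g"
proof
  assume s: "sgrp S m" and e: "e \<in> idems S m" and g: "g \<in> idems S m"
  have gen: "m u v = u" if "u \<in> idems S m" "v \<in> idems S m"
     "u \<in> (\<lambda>x. lmul m x v) ` one_adj S" for u v
  proof -
    from that(3) obtain x where x: "x \<in> one_adj S" "u = lmul m x v" by auto
    have "lmul m x (m v v) = m (lmul m x v) v" using x s that(2) lmul_assoc idems_D by metis
    thus ?thesis using x that(2) by (simp add: idems_def)
  qed
  {
    assume "GreenL S m e g"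
    hence eq: "(\<lambda>x. lmul m x e) ` one_adj S = (\<lambda>x. lmul m x g) ` one_adj S" by (simp add: GreenL_def)
    have "e \<in> (\<lambda>x. lmul m x e) ` one_adj S" by (rule image_eqI[of _ _ None]) auto
    hence 1: "m e g = e" using gen[OF e g] eq by simp
    have "g \<in> (\<lambda>x. lmul m x g) ` one_adj S" by (rule image_eqI[of _ _ None]) auto
    hence 2: "m g e = g" using gen[OF g e] eq by simp
    show "m e g = e \<and> m g e = g" using 1 2 by simp
  }
  {
    assume h: "m e g = e \<and> m g e = g"
    have sub: "(\<lambda>x. lmul m x u) ` one_adj S \<subseteq> (\<lambda>x. lmul m x v) ` one_adj S"
      if "u \<in> S" "v \<in> S" "m u v = u" for u v
    proof
      fix y assume "y \<in> (\<lambda>x. lmul m x u) ` one_adj S"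
      then obtain x where x: "x \<in> one_adj S" "y = lmul m x u" by auto
      have "y = lmul m x (m u v)" using x that by simp
      also have "\<dots> = lmul m (Some (lmul m x u)) v" using lmul_assoc[OF s x(1) that(1) that(2)] that(3) by simp
      finally show "y \<in> (\<lambda>x. lmul m x v) ` one_adj S" using x that s lmul_in by fastforce
    qed
    show "GreenL S m e g" unfolding GreenL_def using sub[of e g] sub[of g e] h e g
      by (auto simp: idems_def)
  }
qed

lemma GreenR_char: "sgrp S m \<Longrightarrow> e \<in> idems S m \<Longrightarrow> g \<in> idems S m \<Longrightarrow>
   GreenR S m e g \<longleftrightarrow> m e g = g \<and> m g e = e"
proof
  assume s: "sgrp S m" and e: "e \<in> idems S m" and g: "g \<in> idems S m"
  have gen: "m v u = u" if "u \<in> idems S m" "v \<in> idems S m"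
     "u \<in> (\<lambda>x. rmul m v x) ` one_adj S" for u v
  proof -
    from that(3) obtain x where x: "x \<in> one_adj S" "u = rmul m v x" by auto
    have "rmul m (m v v) x = m v (rmul m v x)" using x s that(2) rmul_assoc idems_D by metis
    thus ?thesis using x that(2) by (simp add: idems_def)
  qed
  {
    assume "GreenR S m e g"
    hence eq: "(\<lambda>x. rmul m e x) ` one_adj S = (\<lambda>x. rmul m g x) ` one_adj S" by (simp add: GreenR_def)
    have "e \<in> (\<lambda>x. rmul m e x) ` one_adj S" by (rule image_eqI[of _ _ None]) auto
    hence 1: "m g e = e" using gen[OF e g] eq by simp
    have "g \<in> (\<lambda>x. rmul m g x) ` one_adj S" by (rule image_eqI[of _ _ None]) auto
    hence 2: "m e g = g" using gen[OF g e] eq by simp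
    show "m e g = g \<and> m g e = e" using 1 2 by simp
  }
  {
    assume h: "m e g = g \<and> m g e = e"
    have sub: "(\<lambda>x. rmul m u x) ` one_adj S \<subseteq> (\<lambda>x. rmul m v x) ` one_adj S"
      if "u \<in> S" "v \<in> S" "m v u = u" for u v
    proof
      fix y assume "y \<in> (\<lambda>x. rmul m u x) ` one_adj S"
      then obtain x where x: "x \<in> one_adj S" "y = rmul m u x" by auto
      have "y = rmul m (m v u) x" using x that by simp
      also have "\<dots> = rmul m v (Some (rmul m u x))" using rmul_assoc[OF s x(1) that(2) that(1)] that(3) by simp
      finally show "y \<in> (\<lambda>x. rmul m v x) ` one_adj S" using x that s rmul_in by fastforce
    qed
    show "GreenR S m e g" unfolding GreenR_def using sub[of e g] sub[of g e] h e g
      by (auto simp: idems_def)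
  }
qed

lemma adequate_abundant: "adequate U m \<Longrightarrow> abundant U m" by (simp add: adequate_def)
lemma abundant_sgrp: "abundant U m \<Longrightarrow> sgrp U m" by (simp add: abundant_def)

lemma plus_ex1: "adequate U m \<Longrightarrow> a \<in> U \<Longrightarrow> \<exists>!e. e \<in> idems U m \<and> Rstar U m a e"
proof -
  assume ad: "adequate U m" and a: "a \<in> U"
  from ad a obtain e where e: "e \<in> idems U m" "Rstar U m a e"
    by (auto simp: adequate_def abundant_def)
  moreover have "e' = e" if "e' \<in> idems U m" "Rstar U m a e'" for e'
  proof -
    have r: "Rstar U m e e'" using e that Rstar_sym Rstar_trans by metis
    have 1: "m e' e = e" using Rstar_idem[OF r that(1)] .
    have 2: "m e e' = e'" using Rstar_idem[OF Rstar_sym[OF r] e(1)] .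
    have "m e e' = m e' e" using ad e(1) that(1) by (simp add: adequate_def)
    thus ?thesis using 1 2 by simp
  qed
  ultimately show ?thesis by blast
qed

lemma astar_ex1: "adequate U m \<Longrightarrow> a \<in> U \<Longrightarrow> \<exists>!e. e \<in> idems U m \<and> Lstar U m a e"
proof -
  assume ad: "adequate U m" and a: "a \<in> U"
  from ad a obtain e where e: "e \<in> idems U m" "Lstar U m a e"
    by (auto simp: adequate_def abundant_def)
  moreover have "e' = e" if "e' \<in> idems U m" "Lstar U m a e'" for e'
  proof -
    have r: "Lstar U m e e'" using e that Lstar_sym Lstar_trans by metis
    have 1: "m e e' = e" using Lstar_idem[OF r that(1)] .
    have 2: "m e' e = e'" using Lstar_idem[OF Lstar_sym[OF r] e(1)] .
    have "m e e' = m e' e" using ad e(1) that(1) by (simp add: adequate_def)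
    thus ?thesis using 1 2 by simp
  qed
  ultimately show ?thesis by blast
qed

lemma plus_prop: "adequate U m \<Longrightarrow> a \<in> U \<Longrightarrow> plus U m a \<in> idems U m \<and> Rstar U m a (plus U m a)"
  unfolding plus_def by (rule theI') (rule plus_ex1)
lemma astar_prop: "adequate U m \<Longrightarrow> a \<in> U \<Longrightarrow> astar U m a \<in> idems U m \<and> Lstar U m a (astar U m a)"
  unfolding astar_def by (rule theI') (rule astar_ex1)
lemma plus_eq: "adequate U m \<Longrightarrow> e \<in> idems U m \<Longrightarrow> Rstar U m a e \<Longrightarrow> plus U m a = e"
  unfolding plus_def using plus_ex1 Rstar_in by (metis (no_types, lifting) the1_equality)
lemma astar_eq: "adequate U m \<Longrightarrow> e \<in> idems U m \<Longrightarrow> Lstar U m a e \<Longrightarrow> astar U m a = e"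
  unfolding astar_def using astar_ex1 Lstar_in by (metis (no_types, lifting) the1_equality)
lemma plus_idem: "adequate U m \<Longrightarrow> e \<in> idems U m \<Longrightarrow> plus U m e = e"
  by (rule plus_eq) (auto intro: Rstar_refl simp: idems_def)
lemma astar_idem: "adequate U m \<Longrightarrow> e \<in> idems U m \<Longrightarrow> astar U m e = e"
  by (rule astar_eq) (auto intro: Lstar_refl simp: idems_def)


definition dm :: "('a \<Rightarrow> 'a \<Rightarrow> 'a) \<Rightarrow> 'a \<Rightarrow> 'a \<Rightarrow> 'a" where "dm m x y = m y x"

lemma lmul_dm: "lmul (dm m) s a = rmul m a s" by (cases s) (simp_all add: dm_def)
lemma rmul_dm: "rmul (dm m) a s = lmul m s a" by (cases s) (simp_all add: dm_def)

lemma Rstar_dm: "Rstar U (dm m) = Lstar U m"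
  by (intro ext) (simp add: Rstar_def Lstar_def lmul_dm)
lemma Lstar_dm: "Lstar U (dm m) = Rstar U m"
  by (intro ext) (simp add: Rstar_def Lstar_def rmul_dm)
lemma GreenL_dm: "GreenL U (dm m) = GreenR U m"
  by (intro ext) (simp add: GreenL_def GreenR_def lmul_dm)
lemma GreenR_dm: "GreenR U (dm m) = GreenL U m"
  by (intro ext) (simp add: GreenL_def GreenR_def rmul_dm)
lemma idems_dm: "idems U (dm m) = idems U m" by (simp add: idems_def dm_def)
lemma sgrp_dm: "sgrp U (dm m) = sgrp U m"
  unfolding sgrp_def dm_def by (intro iffI conjI; (elim conjE)?; metis)
lemma abundant_dm: "abundant U (dm m) = abundant U m"
  unfolding abundant_def by (auto simp: sgrp_dm idems_dm Rstar_dm Lstar_dm)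
lemma adequate_dm: "adequate U (dm m) = adequate U m"
  unfolding adequate_def by (auto simp: abundant_dm idems_dm dm_def)
lemma plus_dm: "plus U (dm m) = astar U m"
  by (intro ext) (simp add: plus_def astar_def idems_dm Rstar_dm)
lemma astar_dm: "astar U (dm m) = plus U m"
  by (intro ext) (simp add: plus_def astar_def idems_dm Lstar_dm)
lemma left_adequate_dm: "left_adequate U (dm m) = right_adequate U m"
  unfolding left_adequate_def right_adequate_def by (simp add: abundant_dm idems_dm Rstar_dm)
lemma star_sub_dm: "star_subsemigroup U S (dm m) = star_subsemigroup U S m"
  unfolding star_subsemigroup_def by (auto simp: abundant_dm Rstar_dm Lstar_dm)

lemma decomp_dm: "sgrp S m \<Longrightarrow> S0 \<subseteq> S \<Longrightarrow> decomp S0 S (dm m) x b e f = decomp S0 S m x b f e"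
  unfolding decomp_def
  by (auto simp: idems_dm GreenL_dm GreenR_dm plus_dm astar_dm dm_def idems_def sgrp_as)

lemma tbar_dm: "sgrp S m \<Longrightarrow> S0 \<subseteq> S \<Longrightarrow> tbar S0 S (dm m) = tbar S0 S m"
  by (intro ext) (simp add: tbar_def decomp_dm, metis)
lemma te_dm: "sgrp S m \<Longrightarrow> S0 \<subseteq> S \<Longrightarrow> te S0 S (dm m) = tf S0 S m"
  by (intro ext) (simp add: te_def tf_def decomp_dm tbar_dm)
lemma tf_dm: "sgrp S m \<Longrightarrow> S0 \<subseteq> S \<Longrightarrow> tf S0 S (dm m) = te S0 S m"
  by (intro ext) (simp add: te_def tf_def decomp_dm tbar_dm)

lemma at_dm: "adequate_transversal S0 S m \<Longrightarrow> adequate_transversal S0 S (dm m)"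
proof -
  assume a: "adequate_transversal S0 S m"
  hence s: "sgrp S m" and s0: "S0 \<subseteq> S"
    by (auto simp: adequate_transversal_def abundant_def star_subsemigroup_def)
  have "(\<exists>e f. decomp S0 S (dm m) x xb e f) = (\<exists>e f. decomp S0 S m x xb e f)" for x xb
    by (simp add: decomp_dm[OF s s0]) blast
  thus ?thesis using a unfolding adequate_transversal_def
    by (simp add: abundant_dm adequate_dm star_sub_dm)
qed

lemma qi_dm: "qi_adequate_transversal S0 S m \<Longrightarrow> qi_adequate_transversal S0 S (dm m)"
proof -
  assume a: "qi_adequate_transversal S0 S m"
  hence s: "sgrp S m" and s0: "S0 \<subseteq> S"
    by (auto simp: qi_adequate_transversal_def adequate_transversal_def abundant_def star_subsemigroup_def)
  have "m (m b s) a \<in> S0" if "a \<in> S0" "s \<in> S" "b \<in> S0" for a s b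
    using a that unfolding qi_adequate_transversal_def by blast
  hence "m b (m s a) \<in> S0" if "a \<in> S0" "s \<in> S" "b \<in> S0" for a s b
    using that s0 sgrp_as[OF s] by (metis subsetD)
  thus ?thesis using a at_dm[of S0 S m] unfolding qi_adequate_transversal_def by (simp add: dm_def)
qed


locale qiat =
  fixes S S0 :: "'a set" and m :: "'a \<Rightarrow> 'a \<Rightarrow> 'a"
  assumes ab: "abundant S m" and qiat: "qi_adequate_transversal S0 S m"
begin

lemma sg: "sgrp S m" using ab by (simp add: abundant_def)
lemma cl[simp]: "x \<in> S \<Longrightarrow> y \<in> S \<Longrightarrow> m x y \<in> S" using sg by (simp add: sgrp_def)
lemma as: "x \<in> S \<Longrightarrow> y \<in> S \<Longrightarrow> z \<in> S \<Longrightarrow> m (m x y) z = m x (m y z)"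
  using sg by (simp add: sgrp_def)
lemma at: "adequate_transversal S0 S m" using qiat by (simp add: qi_adequate_transversal_def)
lemma ad0: "adequate S0 m" using at by (simp add: adequate_transversal_def)
lemma ss: "star_subsemigroup S0 S m" using at by (simp add: adequate_transversal_def)
lemma S0S: "S0 \<subseteq> S" using ss by (simp add: star_subsemigroup_def)
lemma inS0[simp]: "a \<in> S0 \<Longrightarrow> a \<in> S" using S0S by blast
lemma qi: "a \<in> S0 \<Longrightarrow> s \<in> S \<Longrightarrow> b \<in> S0 \<Longrightarrow> m (m a s) b \<in> S0"
  using qiat by (simp add: qi_adequate_transversal_def)
lemma tr: "x \<in> S \<Longrightarrow> \<exists>!xb. \<exists>e f. decomp S0 S m x xb e f"
  using at by (simp add: adequate_transversal_def)
lemma dual: "qiat S S0 (dm m)"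
  using ab qiat qi_dm by unfold_locales (auto simp: abundant_dm)

lemma sg0: "sgrp S0 m" using ad0 by (simp add: adequate_def abundant_def)
lemma cl0[simp]: "x \<in> S0 \<Longrightarrow> y \<in> S0 \<Longrightarrow> m x y \<in> S0" using sg0 by (simp add: sgrp_def)

abbreviation "pl \<equiv> plus S0 m"
abbreviation "st \<equiv> astar S0 m"
abbreviation "bar \<equiv> tbar S0 S m"
abbreviation "ee \<equiv> te S0 S m"
abbreviation "ff \<equiv> tf S0 S m"

lemma pl_in[simp]: "a \<in> S0 \<Longrightarrow> pl a \<in> S0" using plus_prop[OF ad0] by (simp add: idems_def)
lemma st_in[simp]: "a \<in> S0 \<Longrightarrow> st a \<in> S0" using astar_prop[OF ad0] by (simp add: idems_def)
lemma pl_pl[simp]: "a \<in> S0 \<Longrightarrow> m (pl a) (pl a) = pl a" using plus_prop[OF ad0] by (simp add: idems_def)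
lemma st_st[simp]: "a \<in> S0 \<Longrightarrow> m (st a) (st a) = st a" using astar_prop[OF ad0] by (simp add: idems_def)
lemma pl_R0: "a \<in> S0 \<Longrightarrow> Rstar S0 m a (pl a)" using plus_prop[OF ad0] by simp
lemma st_L0: "a \<in> S0 \<Longrightarrow> Lstar S0 m a (st a)" using astar_prop[OF ad0] by simp
lemma pl_R: "a \<in> S0 \<Longrightarrow> Rstar S m a (pl a)" using ss pl_R0 by (simp add: star_subsemigroup_def)
lemma st_L: "a \<in> S0 \<Longrightarrow> Lstar S m a (st a)" using ss st_L0 by (simp add: star_subsemigroup_def)
lemma pl_a[simp]: "a \<in> S0 \<Longrightarrow> m (pl a) a = a"
  using Rstar_idem[OF pl_R0] plus_prop[OF ad0] by blast
lemma a_st[simp]: "a \<in> S0 \<Longrightarrow> m a (st a) = a"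
  using Lstar_idem[OF st_L0] astar_prop[OF ad0] by blast
lemma comm: "g \<in> idems S0 m \<Longrightarrow> h \<in> idems S0 m \<Longrightarrow> m g h = m h g"
  using ad0 by (simp add: adequate_def)
lemma pl_idem': "g \<in> S0 \<Longrightarrow> m g g = g \<Longrightarrow> pl g = g"
  using plus_idem[OF ad0] by (simp add: idems_def)
lemma st_idem': "g \<in> S0 \<Longrightarrow> m g g = g \<Longrightarrow> st g = g"
  using astar_idem[OF ad0] by (simp add: idems_def)
lemma pl_pl'[simp]: "a \<in> S0 \<Longrightarrow> pl (pl a) = pl a" by (simp add: pl_idem')
lemma st_st'[simp]: "a \<in> S0 \<Longrightarrow> st (st a) = st a" by (simp add: st_idem')

lemma idS: "x \<in> S \<Longrightarrow> m x x = x \<Longrightarrow> x \<in> idems S m" by (simp add: idems_def)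
lemma id0: "x \<in> S0 \<Longrightarrow> m x x = x \<Longrightarrow> x \<in> idems S0 m" by (simp add: idems_def)

lemma GL: "e \<in> S \<Longrightarrow> m e e = e \<Longrightarrow> g \<in> S \<Longrightarrow> m g g = g \<Longrightarrow>
   GreenL S m e g \<longleftrightarrow> m e g = e \<and> m g e = g"
  using GreenL_char[OF sg] by (simp add: idems_def)
lemma GR: "e \<in> S \<Longrightarrow> m e e = e \<Longrightarrow> g \<in> S \<Longrightarrow> m g g = g \<Longrightarrow>
   GreenR S m e g \<longleftrightarrow> m e g = g \<and> m g e = e"
  using GreenR_char[OF sg] by (simp add: idems_def)

lemma decomp_D: "decomp S0 S m x b e f \<Longrightarrow> b \<in> S0 \<and> e \<in> S \<and> f \<in> S \<and> m e e = e \<and> m f f = f \<and>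
   x = m (m e b) f \<and> m e (pl b) = e \<and> m (pl b) e = pl b \<and> m f (st b) = st b \<and> m (st b) f = f"
  unfolding decomp_def using GL[of e "pl b"] GR[of f "st b"] by (auto simp: idems_def)

lemma mkdec: "b \<in> S0 \<Longrightarrow> e \<in> S \<Longrightarrow> f \<in> S \<Longrightarrow> m e e = e \<Longrightarrow> m f f = f \<Longrightarrow>
   m e (pl b) = e \<Longrightarrow> m (pl b) e = pl b \<Longrightarrow> m f (st b) = st b \<Longrightarrow> m (st b) f = f \<Longrightarrow>
   decomp S0 S m (m (m e b) f) b e f"
  unfolding decomp_def using GL[of e "pl b"] GR[of f "st b"] by (auto simp: idems_def)

lemma e_unique: "decomp S0 S m x b e f \<Longrightarrow> decomp S0 S m x b e' f' \<Longrightarrow> e = e'"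
proof -
  assume d1: "decomp S0 S m x b e f" and d2: "decomp S0 S m x b e' f'"
  note D1 = decomp_D[OF d1] and D2 = decomp_D[OF d2]
  have k: "m x (st b) = m e b" if "x = m (m e b) f" "b \<in> S0" "e \<in> S" "f \<in> S" "m f (st b) = st b" for e f
    using that by (simp add: as)
  have 1: "m x (st b) = m e b" by (rule k[of e f]) (use D1 in auto)
  have 2: "m x (st b) = m e' b" by (rule k[of e' f']) (use D2 in auto)
  have "m e b = m e' b" using 1 2 by simp
  hence "lmul m (Some e) b = lmul m (Some e') b" by simp
  hence "lmul m (Some e) (pl b) = lmul m (Some e') (pl b)"
    using Rstar_cancel[OF pl_R, of b "Some e" "Some e'"] D1 D2 by simp
  thus ?thesis using D1 D2 by simp
qed

lemma dec_e: "decomp S0 S m x b e f \<Longrightarrow> bar x = b \<and> ee x = e"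
proof -
  assume d: "decomp S0 S m x b e f"
  note D = decomp_D[OF d]
  have xS: "x \<in> S" using D by simp
  have tb: "bar x = b" unfolding tbar_def using tr[OF xS] d by (intro the1_equality) auto
  have "(THE e. \<exists>f. decomp S0 S m x b e f) = e"
    using d e_unique by blast
  thus ?thesis using tb by (simp add: te_def)
qed

lemma dec: "decomp S0 S m x b e f \<Longrightarrow> bar x = b \<and> ee x = e \<and> ff x = f"
proof -
  assume d: "decomp S0 S m x b e f"
  have "decomp S0 S (dm m) x b f e" using d by (simp add: decomp_dm[OF sg S0S])
  from qiat.dec_e[OF dual this] show ?thesis using dec_e[OF d]
    by (simp add: te_dm[OF sg S0S])
qed

lemma ex: "x \<in> S \<Longrightarrow> decomp S0 S m x (bar x) (ee x) (ff x)"
proof -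
  assume "x \<in> S"
  then obtain b e f where "decomp S0 S m x b e f" using tr by blast
  thus ?thesis using dec by metis
qed

end


lemma Rstar_from:
  assumes s: "sgrp U m" and i: "p \<in> U" "a \<in> U" "q \<in> U" and h: "m a p = p" "m p q = a"
  shows "Rstar U m p a"
proof -
  have 1: "lmul m s a = m (lmul m s p) q" if "s \<in> one_adj U" for s
    using lmul_assoc[OF s that i(1) i(3)] h(2) by simp
  have 2: "lmul m s p = m (lmul m s a) p" if "s \<in> one_adj U" for s
    using lmul_assoc[OF s that i(2) i(1)] h(1) by simp
  show ?thesis unfolding Rstar_def
  proof (intro conjI ballI iffI)
    fix s t assume st: "s \<in> one_adj U" "t \<in> one_adj U"
    { assume "lmul m s p = lmul m t p" thus "lmul m s a = lmul m t a" using 1 st by metis }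
    { assume "lmul m s a = lmul m t a" thus "lmul m s p = lmul m t p" using 2 st by metis }
  qed (use i in auto)
qed

lemma Lstar_from:
  assumes s: "sgrp U m" and i: "p \<in> U" "a \<in> U" "q \<in> U" and h: "m p a = p" "m q p = a"
  shows "Lstar U m p a"
proof -
  have 1: "rmul m a s = m q (rmul m p s)" if "s \<in> one_adj U" for s
    using rmul_assoc[OF s that i(3) i(1)] h(2) by simp
  have 2: "rmul m p s = m p (rmul m a s)" if "s \<in> one_adj U" for s
    using rmul_assoc[OF s that i(1) i(2)] h(1) by simp
  show ?thesis unfolding Lstar_def
  proof (intro conjI ballI iffI)
    fix s t assume st: "s \<in> one_adj U" "t \<in> one_adj U"
    { assume "rmul m p s = rmul m p t" thus "rmul m a s = rmul m a t" using 1 st by metis }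
    { assume "rmul m a s = rmul m a t" thus "rmul m p s = rmul m p t" using 2 st by metis }
  qed (use i in auto)
qed

context qiat begin

lemma r2: "m u v = w \<Longrightarrow> u \<in> S \<Longrightarrow> v \<in> S \<Longrightarrow> y \<in> S \<Longrightarrow> m u (m v y) = m w y"
  by (simp add: as[symmetric])

lemma pl_a2: "a \<in> S0 \<Longrightarrow> y \<in> S \<Longrightarrow> m (pl a) (m a y) = m a y"
  by (simp add: as[symmetric])
lemma a_st2: "a \<in> S0 \<Longrightarrow> y \<in> S \<Longrightarrow> m a (m (st a) y) = m a y"
  by (simp add: as[symmetric])

lemma exD: "x \<in> S \<Longrightarrow> bar x \<in> S0 \<and> ee x \<in> S \<and> ff x \<in> S \<and> m (ee x) (ee x) = ee x \<and> m (ff x) (ff x) = ff x \<and>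
   x = m (m (ee x) (bar x)) (ff x) \<and> m (ee x) (pl (bar x)) = ee x \<and> m (pl (bar x)) (ee x) = pl (bar x) \<and>
   m (ff x) (st (bar x)) = st (bar x) \<and> m (st (bar x)) (ff x) = ff x"
  using decomp_D[OF ex] .

lemma bar_S0: "a \<in> S0 \<Longrightarrow> bar a = a \<and> ee a = pl a \<and> ff a = st a"
proof -
  assume a: "a \<in> S0"
  have "decomp S0 S m (m (m (pl a) a) (st a)) a (pl a) (st a)"
    by (rule mkdec) (use a in \<open>simp_all add: comm[of "pl a" "st a"] id0\<close>)
  thus ?thesis using a dec by simp
qed

lemma R_te: "x \<in> S \<Longrightarrow> Rstar S m x (ee x)"
proof -
  assume x: "x \<in> S"
  note D = exD[OF x]
  define a e f where "a = bar x" "e = ee x" "f = ff x"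
  have D': "a \<in> S0" "e \<in> S" "f \<in> S" "x = m (m e a) f" "m e (pl a) = e" "m f (st a) = st a"
    using D unfolding a_e_f_def by auto
  have P: "lmul m s x = m (m (lmul m s e) a) f" if "s \<in> one_adj S" for s
    using that D' by (simp add: lmul_assoc[OF sg] lmul_in[OF sg] as)
  have Q: "m (m (m y a) f) (st a) = m y a" if "y \<in> S" for y
    using that D' by (simp add: as)
  have Ps: "lmul m s (pl a) = lmul m s e \<Longrightarrow> True" for s by simp
  show ?thesis unfolding Rstar_def
  proof (intro conjI ballI iffI)
    fix s t assume st: "s \<in> one_adj S" "t \<in> one_adj S"
    have ls: "lmul m s e \<in> S" "lmul m t e \<in> S" using st D' lmul_in[OF sg] by auto
    {
      assume "lmul m s x = lmul m t x"
      hence "m (m (lmul m s e) a) f = m (m (lmul m t e) a) f" using P st by simp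
      hence "m (lmul m s e) a = m (lmul m t e) a" using Q ls by metis
      hence "lmul m (Some (lmul m s e)) a = lmul m (Some (lmul m t e)) a" by simp
      hence "lmul m (Some (lmul m s e)) (pl a) = lmul m (Some (lmul m t e)) (pl a)"
        using Rstar_cancel[OF pl_R[OF D'(1)], of "Some (lmul m s e)" "Some (lmul m t e)"] ls by simp
      moreover have es: "m (lmul m u e) (pl a) = lmul m u e" if "u \<in> one_adj S" for u
        using lmul_assoc[OF sg that D'(2) inS0[OF pl_in[OF D'(1)]]] D'(5) by simp
      ultimately show "lmul m s (ee x) = lmul m t (ee x)" using st a_e_f_def by simp
    }
    {
      assume "lmul m s (ee x) = lmul m t (ee x)"
      thus "lmul m s x = lmul m t x" using P st a_e_f_def by simp
    }
  qed (use x D in auto)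
qed

lemma L_tf: "x \<in> S \<Longrightarrow> Lstar S m x (ff x)"
  using qiat.R_te[OF dual] by (simp add: Rstar_dm te_dm[OF sg S0S])

lemma prod:
  assumes x: "x \<in> S" and z: "z \<in> S"
  defines "d \<equiv> m (m (bar x) (m (ff x) (ee z))) (bar z)"
  shows "bar (m x z) = d \<and> ee (m x z) = m (ee x) (pl d) \<and> ff (m x z) = m (st d) (ff z)"
proof -
  note X = exD[OF x] and Z = exD[OF z]
  obtain a e f c e' f' where abbr: "a = bar x" "e = ee x" "f = ff x" "c = bar z" "e' = ee z" "f' = ff z"
    by blast
  have X': "a \<in> S0" "e \<in> S" "f \<in> S" "m e e = e" "m f f = f" "x = m (m e a) f" "m e (pl a) = e"
     "m (pl a) e = pl a" "m f (st a) = st a" "m (st a) f = f" using X abbr by auto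
  have Z': "c \<in> S0" "e' \<in> S" "f' \<in> S" "m e' e' = e'" "m f' f' = f'" "z = m (m e' c) f'" "m e' (pl c) = e'"
     "m (pl c) e' = pl c" "m f' (st c) = st c" "m (st c) f' = f'" using Z abbr by auto
  have dd: "d = m (m a (m f e')) c" using abbr d_def by simp
  have d0: "d \<in> S0" unfolding dd using X' Z' by (simp add: qi)
  have dS: "d \<in> S" using d0 by simp
  define D D' where "D = pl d" "D' = st d"
  have DD: "D \<in> S0" "D' \<in> S0" "m D D = D" "m D' D' = D'" "m D d = d" "m d D' = d"
    using d0 D_D'_def by auto
  have h1: "m (pl a) d = d" unfolding dd using X' Z' by (simp add: as pl_a2)
  have h2: "m (pl a) D = D"
    using Rstar_cancel[OF pl_R[OF d0], of "Some (pl a)" None] h1 X' D_D'_def by simp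
  have h2': "m D (pl a) = D" using h2 comm[of D "pl a"] DD X' by (simp add: id0)
  have h3: "m D e = D" using r2[OF h2', of e] h2' X' DD by simp
  have k1: "m d (st c) = d" unfolding dd using X' Z' by (simp add: as)
  have k2: "m D' (st c) = D'"
    using Lstar_cancel[OF st_L[OF d0], of "Some (st c)" None] k1 Z' D_D'_def by simp
  have k2': "m (st c) D' = D'" using k2 comm[of D' "st c"] DD Z' by (simp add: id0)
  have k3: "m f' D' = D'" using r2[OF Z'(9), of D'] k2' Z' DD by simp
  define E F where "E = m e D" "F = m D' f'"
  have E: "E \<in> S" "m E E = E" "m E D = E" "m D E = D"
    unfolding E_F_def using X' DD h3 by (simp_all add: as r2[OF h3])
  have F: "F \<in> S" "m F F = F" "m F D' = D'" "m D' F = F"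
    unfolding E_F_def using Z' DD k3 by (simp_all add: as r2[OF k3] r2[OF DD(4)])
  have "decomp S0 S m (m (m E d) F) d E F"
    by (rule mkdec) (use d0 E F D_D'_def in auto)
  moreover have "m (m E d) F = m x z"
  proof -
    have "m (m E d) F = m e (m d f')" unfolding E_F_def using X' Z' DD dS
      by (simp add: as r2[OF DD(5)] r2[OF DD(6)])
    also have "\<dots> = m x z" unfolding dd using X' Z' by (simp add: as)
    finally show ?thesis .
  qed
  ultimately have "decomp S0 S m (m x z) d E F" by simp
  thus ?thesis using dec E_F_def D_D'_def abbr by simp
qed

end


context qiat begin

lemma bar_in: "x \<in> S \<Longrightarrow> bar x \<in> S0" using exD by blast
lemma ee_props: "x \<in> S \<Longrightarrow> ee x \<in> S \<and> m (ee x) (ee x) = ee x \<and> m (ee x) (pl (bar x)) = ee x \<and> m (pl (bar x)) (ee x) = pl (bar x)"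
  using exD by blast
lemma ff_props: "x \<in> S \<Longrightarrow> ff x \<in> S \<and> m (ff x) (ff x) = ff x \<and> m (ff x) (st (bar x)) = st (bar x) \<and> m (st (bar x)) (ff x) = ff x"
  using exD by blast

abbreviation "Ls \<equiv> {x \<in> S. ff x = ff (bar x)}"
abbreviation "Rs \<equiv> {x \<in> S. ee x = ee (bar x)}"

lemma Ls_iff: "x \<in> Ls \<longleftrightarrow> x \<in> S \<and> ff x = st (bar x)"
  using exD bar_S0 by auto

lemma d_st: "a \<in> S0 \<Longrightarrow> y \<in> S \<Longrightarrow> c \<in> S0 \<Longrightarrow> m (st (m (m a y) c)) (st c) = st (m (m a y) c)"
proof -
  assume h: "a \<in> S0" "y \<in> S" "c \<in> S0"
  have d0: "m (m a y) c \<in> S0" using h qi by simp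
  have "m (m (m a y) c) (st c) = m (m a y) c" using h by (simp add: as)
  thus ?thesis
    using Lstar_cancel[OF st_L[OF d0], of "Some (st c)" None] h by simp
qed

lemma d_pl: "a \<in> S0 \<Longrightarrow> y \<in> S \<Longrightarrow> c \<in> S0 \<Longrightarrow> m (pl a) (pl (m (m a y) c)) = pl (m (m a y) c)"
proof -
  assume h: "a \<in> S0" "y \<in> S" "c \<in> S0"
  have d0: "m (m a y) c \<in> S0" using h qi by simp
  have "m (pl a) (m (m a y) c) = m (m a y) c" using h by (simp add: as pl_a2)
  thus ?thesis
    using Rstar_cancel[OF pl_R[OF d0], of "Some (pl a)" None] h by simp
qed

lemma Ls_mult: "x \<in> Ls \<Longrightarrow> z \<in> Ls \<Longrightarrow> m x z \<in> Ls"
proof -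
  assume x: "x \<in> Ls" and z: "z \<in> Ls"
  hence xz: "x \<in> S" "z \<in> S" "ff z = st (bar z)" using Ls_iff by auto
  note P = prod[OF xz(1,2)]
  have "m (st (m (m (bar x) (m (ff x) (ee z))) (bar z))) (st (bar z)) =
        st (m (m (bar x) (m (ff x) (ee z))) (bar z))"
    by (rule d_st) (use exD[OF xz(1)] exD[OF xz(2)] in auto)
  thus ?thesis using P xz Ls_iff by simp
qed

lemma ee_dec: "x \<in> S \<Longrightarrow> bar (ee x) = pl (bar x) \<and> ee (ee x) = ee x \<and> ff (ee x) = pl (bar x)"
proof -
  assume x: "x \<in> S"
  note X = exD[OF x]
  have "decomp S0 S m (m (m (ee x) (pl (bar x))) (pl (bar x))) (pl (bar x)) (ee x) (pl (bar x))"
    by (rule mkdec) (use X in \<open>auto simp: st_idem'\<close>)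
  thus ?thesis using dec X by simp
qed

lemma ee_L: "x \<in> S \<Longrightarrow> ee x \<in> Ls"
  using ee_dec exD Ls_iff by (simp add: st_idem')

lemma st_Ls: "a \<in> S0 \<Longrightarrow> st a \<in> Ls"
  using Ls_iff bar_S0 by simp

lemma idem_L: "g \<in> Ls \<Longrightarrow> m g g = g \<Longrightarrow> ee g = g \<and> bar g \<in> S0 \<and> m (bar g) (bar g) = bar g"
proof -
  assume g: "g \<in> Ls" "m g g = g"
  hence gS: "g \<in> S" and f: "ff g = st (bar g)" using Ls_iff by auto
  define b where "b = bar g"
  have b0: "b \<in> S0" using exD[OF gS] b_def by simp
  have Lg: "Lstar S m g (st b)" using L_tf[OF gS] f b_def by simp
  have 1: "m g (st b) = g" using Lstar_idem[OF Lg] b0 by (simp add: id0 idS)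
  have 2: "m (st b) g = st b" using Lstar_idem[OF Lstar_sym[OF Lg]] g gS by (simp add: idS)
  have "decomp S0 S m (m (m g (st b)) (st b)) (st b) g (st b)"
    by (rule mkdec) (use b0 gS g 1 2 in \<open>auto simp: pl_idem'\<close>)
  hence "bar g = st b \<and> ee g = g" using dec 1 by simp
  moreover have "m (st b) (st b) = st b" using b0 by simp
  ultimately show ?thesis using b_def b0 by simp
qed

lemma I_lemma:
  assumes e: "e \<in> S" "m e e = e" and e': "e' \<in> S" "m e' e' = e'"
    and al: "\<alpha> \<in> S0" "m \<alpha> \<alpha> = \<alpha>" and al': "\<alpha>' \<in> S0" "m \<alpha>' \<alpha>' = \<alpha>'"
    and h: "m e \<alpha> = e" "m \<alpha> e = \<alpha>" "m e' \<alpha>' = e'" "m \<alpha>' e' = \<alpha>'" "m e e' = e'" "m e' e = e"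
  shows "e = e'"
proof -
  define p q where "p = m (m \<alpha> e') \<alpha>'" "q = m (m \<alpha>' e) \<alpha>"
  have p0: "p \<in> S0" "q \<in> S0" using p_q_def qi e e' al al' by auto
  have pq: "m p q = \<alpha>" unfolding p_q_def using e e' al al' h
    by (simp add: as r2[OF al'(2)] r2[OF h(3)] r2[OF h(6)] r2[OF h(2)])
  have qp: "m q p = \<alpha>'" unfolding p_q_def using e e' al al' h
    by (simp add: as r2[OF al(2)] r2[OF h(1)] r2[OF h(5)] r2[OF h(4)])
  have ap: "m \<alpha> p = p" "m p \<alpha>' = p" unfolding p_q_def using al al' e'
    by (simp_all add: as r2[OF al(2)])
  have R: "Rstar S0 m p \<alpha>" by (rule Rstar_from[OF sg0 p0(1) al(1) p0(2) ap(1) pq])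
  have L: "Lstar S0 m p \<alpha>'" by (rule Lstar_from[OF sg0 p0(1) al'(1) p0(2) ap(2) qp])
  have plp: "pl p = \<alpha>" using plus_eq[OF ad0 _ R] al by (simp add: id0)
  have stp: "st p = \<alpha>'" using astar_eq[OF ad0 _ L] al' by (simp add: id0)
  have "m (m e p) \<alpha>' = e'" unfolding p_q_def using e e' al al' h
    by (simp add: as r2[OF al'(2)] r2[OF h(3)] r2[OF h(1)])
  moreover have "decomp S0 S m (m (m e p) \<alpha>') p e \<alpha>'"
    by (rule mkdec) (use p0 e al al' h plp stp in auto)
  ultimately have "bar e' = p" using dec by metis
  moreover have "decomp S0 S m (m (m e' \<alpha>') \<alpha>') \<alpha>' e' \<alpha>'"
    by (rule mkdec) (use e' al' h in \<open>auto simp: pl_idem' st_idem'\<close>)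
  hence "bar e' = \<alpha>'" using dec h by simp
  ultimately have "p = \<alpha>'" by simp
  hence aa: "\<alpha> = \<alpha>'" using plp al' by (simp add: pl_idem')
  have "e = m e \<alpha>" using h by simp
  also have "\<dots> = m e (m \<alpha> e')" using h aa by simp
  also have "\<dots> = m e e'" using e e' al h by (simp add: as[symmetric])
  finally show ?thesis using h by simp
qed

lemma left_adeq: "left_adequate Ls m"
proof -
  have LS: "Ls \<subseteq> S" by auto
  have sgL: "sgrp Ls m" unfolding sgrp_def using Ls_mult by (auto simp: as)
  have idL: "e \<in> idems Ls m" if "e \<in> Ls" "m e e = e" for e using that by (simp add: idems_def)
  have Rx: "Rstar Ls m x (ee x)" if "x \<in> Ls" for x
    using Rstar_restrict[OF R_te LS] that ee_L by auto
  have Lx: "Lstar Ls m x (st (bar x))" if "x \<in> Ls" for x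
  proof -
    have xS: "x \<in> S" using that by simp
    have "ff x = st (bar x)" using that Ls_iff by blast
    hence "Lstar S m x (st (bar x))" using L_tf[OF xS] by simp
    thus ?thesis using Lstar_restrict[OF _ LS that st_Ls[OF bar_in[OF xS]]] by blast
  qed
  have ab: "abundant Ls m" unfolding abundant_def
  proof (intro conjI ballI sgL)
    fix x assume x: "x \<in> Ls"
    hence xS: "x \<in> S" by simp
    have b0: "bar x \<in> S0" using bar_in[OF xS] by blast
    have "ee x \<in> idems Ls m" using idL[OF ee_L[OF xS]] ee_props[OF xS] by blast
    thus "\<exists>e\<in>idems Ls m. Rstar Ls m x e" using Rx[OF x] by blast
    have "st (bar x) \<in> idems Ls m" using idL[OF st_Ls[OF b0]] b0 by simp
    thus "\<exists>f\<in>idems Ls m. Lstar Ls m x f" using Lx[OF x] by blast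
  qed
  have uniq: "g = h" if "g \<in> idems Ls m" "Rstar Ls m x g" "h \<in> idems Ls m" "Rstar Ls m x h" for x g h
  proof -
    have gh: "Rstar Ls m g h" using Rstar_trans[OF Rstar_sym[OF that(2)] that(4)] .
    have 1: "m g h = h" using Rstar_idem[OF Rstar_sym[OF gh] that(1)] .
    have 2: "m h g = g" using Rstar_idem[OF gh that(3)] .
    have g: "g \<in> Ls" "m g g = g" using that(1) unfolding idems_def by blast+
    have h: "h \<in> Ls" "m h h = h" using that(3) unfolding idems_def by blast+
    note G = idem_L[OF g] and H = idem_L[OF h]
    have gS: "g \<in> S" and hS: "h \<in> S" using g(1) h(1) by blast+
    have G2: "m g (bar g) = g" "m (bar g) g = bar g"
      using ee_props[OF gS] G by (simp_all add: pl_idem')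
    have H2: "m h (bar h) = h" "m (bar h) h = bar h"
      using ee_props[OF hS] H by (simp_all add: pl_idem')
    show "g = h" by (rule I_lemma[of g h "bar g" "bar h", OF gS g(2) hS h(2)]) (use G H G2 H2 1 2 in simp_all)
  qed
  show ?thesis unfolding left_adequate_def
  proof (intro conjI ab ballI)
    fix x assume x: "x \<in> Ls"
    hence xS: "x \<in> S" by simp
    have "ee x \<in> idems Ls m" using idL[OF ee_L[OF xS]] ee_props[OF xS] by blast
    thus "\<exists>!e. e \<in> idems Ls m \<and> Rstar Ls m x e"
      using Rx[OF x] uniq by blast
  qed
qed

lemma right_adeq: "right_adequate Rs m"
  using qiat.left_adeq[OF dual] by (simp add: tf_dm[OF sg S0S] tbar_dm[OF sg S0S] left_adequate_dm)

end


context qiat begin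

definition "phi x = (m (ee x) (bar x), m (bar x) (ff x))"
abbreviation "Tset \<equiv> {(x, a). x \<in> Ls \<and> a \<in> Rs \<and> bar x = bar a}"
abbreviation "mT \<equiv> (\<lambda>(x, a) (y, b). (m (m (ee x) a) y, m (m a y) (ff b)))"

lemma x_eq: "x \<in> S \<Longrightarrow> m (m (ee x) (bar x)) (ff x) = x" using exD by metis

lemma eb_dec: "x \<in> S \<Longrightarrow> bar (m (ee x) (bar x)) = bar x \<and> ee (m (ee x) (bar x)) = ee x \<and>
   ff (m (ee x) (bar x)) = st (bar x)"
proof -
  assume x: "x \<in> S"
  note E = ee_props[OF x] and b = bar_in[OF x]
  have "decomp S0 S m (m (m (ee x) (bar x)) (st (bar x))) (bar x) (ee x) (st (bar x))"
    by (rule mkdec) (use E b in auto)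
  moreover have "m (m (ee x) (bar x)) (st (bar x)) = m (ee x) (bar x)" using E b by (simp add: as)
  ultimately show ?thesis using dec by metis
qed

lemma bf_dec: "x \<in> S \<Longrightarrow> bar (m (bar x) (ff x)) = bar x \<and> ee (m (bar x) (ff x)) = pl (bar x) \<and>
   ff (m (bar x) (ff x)) = ff x"
proof -
  assume x: "x \<in> S"
  note F = ff_props[OF x] and b = bar_in[OF x]
  have "decomp S0 S m (m (m (pl (bar x)) (bar x)) (ff x)) (bar x) (pl (bar x)) (ff x)"
    by (rule mkdec) (use F b in auto)
  moreover have "m (m (pl (bar x)) (bar x)) (ff x) = m (bar x) (ff x)" using F b by simp
  ultimately show ?thesis using dec by metis
qed

lemma phi_in: "x \<in> S \<Longrightarrow> phi x \<in> Tset"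
proof -
  assume x: "x \<in> S"
  note E = ee_props[OF x] and F = ff_props[OF x] and b = bar_in[OF x]
  have 1: "m (ee x) (bar x) \<in> Ls" using eb_dec[OF x] E b Ls_iff by simp
  have 2: "m (bar x) (ff x) \<in> Rs" using bf_dec[OF x] F b bar_S0 by simp
  show ?thesis using 1 2 eb_dec[OF x] bf_dec[OF x] by (simp add: phi_def)
qed

lemma phi_inj: "inj_on phi S"
proof (rule inj_onI)
  fix x y assume x: "x \<in> S" and y: "y \<in> S" and eq: "phi x = phi y"
  hence 1: "m (ee x) (bar x) = m (ee y) (bar y)" and 2: "m (bar x) (ff x) = m (bar y) (ff y)"
    by (simp_all add: phi_def)
  have b: "bar x = bar y" using eb_dec[OF x] eb_dec[OF y] 1 by metis
  have e: "ee x = ee y" using eb_dec[OF x] eb_dec[OF y] 1 by metis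
  have f: "ff x = ff y" using bf_dec[OF x] bf_dec[OF y] 2 by metis
  show "x = y" using x_eq[OF x] x_eq[OF y] b e f by metis
qed

lemma phi_surj: "Tset \<subseteq> phi ` S"
proof
  fix p assume p: "p \<in> Tset"
  then obtain y b where pyb: "p = (y, b)" and y: "y \<in> S" "ff y = ff (bar y)"
    and bb: "b \<in> S" "ee b = ee (bar b)" and yb: "bar y = bar b" by blast
  define c where "c = bar y"
  have c0: "c \<in> S0" using bar_in[OF y(1)] c_def by simp
  have fy: "ff y = st c" using y c_def bar_S0 c0 by simp
  have eb: "ee b = pl c" using bb yb c_def bar_S0 c0 by simp
  note E = ee_props[OF y(1)] and F = ff_props[OF bb(1)]
  have d: "decomp S0 S m (m (m (ee y) c) (ff b)) c (ee y) (ff b)"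
    by (rule mkdec) (use E F c0 c_def yb in auto)
  define x where "x = m (m (ee y) c) (ff b)"
  have xS: "x \<in> S" using x_def E F c0 by simp
  have D: "bar x = c \<and> ee x = ee y \<and> ff x = ff b" using dec[OF d] x_def by simp
  have "y = m (m (ee y) c) (st c)" using x_eq[OF y(1)] fy c_def by simp
  also have "\<dots> = m (ee y) c" using E c0 by (simp add: as)
  finally have 1: "y = m (ee y) c" .
  have "b = m (m (pl c) c) (ff b)" using x_eq[OF bb(1)] eb yb c_def by simp
  also have "\<dots> = m c (ff b)" using c0 by simp
  finally have 2: "b = m c (ff b)" .
  have "phi x = p" using D 1 2 pyb by (simp add: phi_def)
  thus "p \<in> phi ` S" using xS by blast
qed

lemma phi_img: "phi ` S = Tset"
proof (rule equalityI)
  show "phi ` S \<subseteq> Tset" by (rule image_subsetI) (rule phi_in)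
qed (rule phi_surj)

lemma phi_hom: "x \<in> S \<Longrightarrow> z \<in> S \<Longrightarrow> phi (m x z) = mT (phi x) (phi z)"
proof -
  assume x: "x \<in> S" and z: "z \<in> S"
  note P = prod[OF x z]
  define d where "d = m (m (bar x) (m (ff x) (ee z))) (bar z)"
  have d0: "d \<in> S0" unfolding d_def using bar_in[OF x] bar_in[OF z] ee_props[OF z] ff_props[OF x]
    by (simp add: qi)
  note E = ee_props[OF x] ee_props[OF z] and F = ff_props[OF x] ff_props[OF z]
    and B = bar_in[OF x] bar_in[OF z]
  have "phi (m x z) = (m (m (ee x) (pl d)) d, m d (m (st d) (ff z)))"
    using P d_def by (simp add: phi_def)
  also have "\<dots> = (m (ee x) d, m d (ff z))" using d0 E F by (simp add: as a_st2)
  also have "\<dots> = mT (phi x) (phi z)" unfolding d_def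
    using eb_dec[OF x] bf_dec[OF z] E F B by (simp add: phi_def as)
  finally show ?thesis .
qed

lemma phi_iso: "sgrp_iso phi S m Tset mT"
  unfolding sgrp_iso_def bij_betw_def using phi_inj phi_img phi_hom by blast

end


locale iso_tr =
  fixes \<phi> :: "'a \<Rightarrow> 'b" and S :: "'a set" and m :: "'a \<Rightarrow> 'a \<Rightarrow> 'a" and n :: "'b \<Rightarrow> 'b \<Rightarrow> 'b"
  assumes sg: "sgrp S m" and inj: "inj_on \<phi> S" and hom: "\<forall>x\<in>S. \<forall>y\<in>S. \<phi> (m x y) = n (\<phi> x) (\<phi> y)"
begin

lemma hom': "x \<in> S \<Longrightarrow> y \<in> S \<Longrightarrow> n (\<phi> x) (\<phi> y) = \<phi> (m x y)" using hom by simp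
lemma cl: "x \<in> S \<Longrightarrow> y \<in> S \<Longrightarrow> m x y \<in> S" using sg by (simp add: sgrp_def)
lemma eqp: "x \<in> S \<Longrightarrow> y \<in> S \<Longrightarrow> (\<phi> x = \<phi> y) = (x = y)" using inj by (meson inj_on_eq_iff)
lemma memp: "U \<subseteq> S \<Longrightarrow> x \<in> S \<Longrightarrow> (\<phi> x \<in> \<phi> ` U) = (x \<in> U)"
  using inj by (auto dest: inj_onD)

lemma one_adj_img: "one_adj (\<phi> ` U) = map_option \<phi> ` one_adj U"
  by (simp add: one_adj_def image_image)

lemma lmul_img: "U \<subseteq> S \<Longrightarrow> s \<in> one_adj U \<Longrightarrow> a \<in> S \<Longrightarrow> lmul n (map_option \<phi> s) (\<phi> a) = \<phi> (lmul m s a)"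
  by (cases s) (auto simp: hom' one_adj_def)
lemma rmul_img: "U \<subseteq> S \<Longrightarrow> s \<in> one_adj U \<Longrightarrow> a \<in> S \<Longrightarrow> rmul n (\<phi> a) (map_option \<phi> s) = \<phi> (rmul m a s)"
  by (cases s) (auto simp: hom' one_adj_def)
lemma lmul_eq: "U \<subseteq> S \<Longrightarrow> s \<in> one_adj U \<Longrightarrow> t \<in> one_adj U \<Longrightarrow> a \<in> S \<Longrightarrow>
   (\<phi> (lmul m s a) = \<phi> (lmul m t a)) = (lmul m s a = lmul m t a)"
  by (rule eqp) (auto intro: lmul_in[OF sg] one_adj_mono)
lemma rmul_eq: "U \<subseteq> S \<Longrightarrow> s \<in> one_adj U \<Longrightarrow> t \<in> one_adj U \<Longrightarrow> a \<in> S \<Longrightarrow>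
   (\<phi> (rmul m a s) = \<phi> (rmul m a t)) = (rmul m a s = rmul m a t)"
  by (rule eqp) (auto intro: rmul_in[OF sg] one_adj_mono)

lemma Rstar_tr: "U \<subseteq> S \<Longrightarrow> a \<in> S \<Longrightarrow> b \<in> S \<Longrightarrow> Rstar (\<phi> ` U) n (\<phi> a) (\<phi> b) = Rstar U m a b"
  unfolding Rstar_def by (simp add: memp one_adj_img lmul_img lmul_eq cong: conj_cong)
lemma Lstar_tr: "U \<subseteq> S \<Longrightarrow> a \<in> S \<Longrightarrow> b \<in> S \<Longrightarrow> Lstar (\<phi> ` U) n (\<phi> a) (\<phi> b) = Lstar U m a b"
  unfolding Lstar_def by (simp add: memp one_adj_img rmul_img rmul_eq cong: conj_cong)

lemma GreenL_tr: "a \<in> S \<Longrightarrow> b \<in> S \<Longrightarrow> GreenL (\<phi> ` S) n (\<phi> a) (\<phi> b) = GreenL S m a b"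
proof -
  assume a: "a \<in> S" and b: "b \<in> S"
  have im: "(\<lambda>s. lmul n s (\<phi> c)) ` one_adj (\<phi> ` S) = \<phi> ` ((\<lambda>s. lmul m s c) ` one_adj S)" if "c \<in> S" for c
    unfolding one_adj_img image_image using lmul_img[OF subset_refl _ that] by (auto intro!: image_cong)
  have sub: "(\<lambda>s. lmul m s c) ` one_adj S \<subseteq> S" if "c \<in> S" for c
    using lmul_in[OF sg _ that] by auto
  show ?thesis unfolding GreenL_def using im[OF a] im[OF b] sub[OF a] sub[OF b] a b
    inj_on_image_eq_iff[OF inj] by simp
qed

lemma GreenR_tr: "a \<in> S \<Longrightarrow> b \<in> S \<Longrightarrow> GreenR (\<phi> ` S) n (\<phi> a) (\<phi> b) = GreenR S m a b"
proof -
  assume a: "a \<in> S" and b: "b \<in> S"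
  have im: "(\<lambda>s. rmul n (\<phi> c) s) ` one_adj (\<phi> ` S) = \<phi> ` ((\<lambda>s. rmul m c s) ` one_adj S)" if "c \<in> S" for c
    unfolding one_adj_img image_image using rmul_img[OF subset_refl _ that] by (auto intro!: image_cong)
  have sub: "(\<lambda>s. rmul m c s) ` one_adj S \<subseteq> S" if "c \<in> S" for c
    using rmul_in[OF sg _ that] by auto
  show ?thesis unfolding GreenR_def using im[OF a] im[OF b] sub[OF a] sub[OF b] a b
    inj_on_image_eq_iff[OF inj] by simp
qed

lemma idems_tr: "U \<subseteq> S \<Longrightarrow> x \<in> S \<Longrightarrow> (\<phi> x \<in> idems (\<phi> ` U) n) = (x \<in> idems U m)"
  unfolding idems_def by (simp add: memp hom' eqp cl)

lemma idems_sub: "U \<subseteq> S \<Longrightarrow> idems (\<phi> ` U) n \<subseteq> \<phi> ` U" by (auto simp: idems_def)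

lemma sgrp_tr: "U \<subseteq> S \<Longrightarrow> sgrp U m \<Longrightarrow> sgrp (\<phi> ` U) n"
proof -
  assume U: "U \<subseteq> S" and s: "sgrp U m"
  have c: "m x y \<in> U" if "x \<in> U" "y \<in> U" for x y using s that by (simp add: sgrp_def)
  have a: "m (m x y) z = m x (m y z)" if "x \<in> U" "y \<in> U" "z \<in> U" for x y z
    using s that by (simp add: sgrp_def)
  show ?thesis unfolding sgrp_def
  proof (intro conjI ballI)
    fix x' y' assume "x' \<in> \<phi> ` U" "y' \<in> \<phi> ` U"
    then obtain x y where "x \<in> U" "y \<in> U" "x' = \<phi> x" "y' = \<phi> y" by blast
    moreover have "x \<in> S" "y \<in> S" using U \<open>x \<in> U\<close> \<open>y \<in> U\<close> by auto
    ultimately show "n x' y' \<in> \<phi> ` U" using c by (simp add: hom')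
  next
    fix x' y' z' assume "x' \<in> \<phi> ` U" "y' \<in> \<phi> ` U" "z' \<in> \<phi> ` U"
    then obtain x y z where xyz: "x \<in> U" "y \<in> U" "z \<in> U" "x' = \<phi> x" "y' = \<phi> y" "z' = \<phi> z" by blast
    have S: "x \<in> S" "y \<in> S" "z \<in> S" "m x y \<in> S" "m y z \<in> S" using xyz U c by auto
    show "n (n x' y') z' = n x' (n y' z')" using xyz S a by (simp add: hom')
  qed
qed

lemma abundant_tr: "U \<subseteq> S \<Longrightarrow> abundant U m \<Longrightarrow> abundant (\<phi> ` U) n"
proof -
  assume U: "U \<subseteq> S" and ab: "abundant U m"
  show ?thesis unfolding abundant_def
  proof (intro conjI ballI)
    show "sgrp (\<phi> ` U) n" using sgrp_tr[OF U] ab by (simp add: abundant_def)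
    fix a' assume "a' \<in> \<phi> ` U"
    then obtain a where a: "a \<in> U" "a' = \<phi> a" by blast
    from ab a obtain e f where ef: "e \<in> idems U m" "Rstar U m a e" "f \<in> idems U m" "Lstar U m a f"
      by (auto simp: abundant_def)
    have S: "a \<in> S" "e \<in> S" "f \<in> S" using U a ef by (auto simp: idems_def)
    show "\<exists>e\<in>idems (\<phi> ` U) n. Rstar (\<phi> ` U) n a' e"
      using ef S a U by (intro bexI[of _ "\<phi> e"]) (simp_all add: Rstar_tr idems_tr)
    show "\<exists>e\<in>idems (\<phi> ` U) n. Lstar (\<phi> ` U) n a' e"
      using ef S a U by (intro bexI[of _ "\<phi> f"]) (simp_all add: Lstar_tr idems_tr)
  qed
qed

lemma adequate_tr: "U \<subseteq> S \<Longrightarrow> adequate U m \<Longrightarrow> adequate (\<phi> ` U) n"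
proof -
  assume U: "U \<subseteq> S" and ad: "adequate U m"
  have "n e' f' = n f' e'" if ef: "e' \<in> idems (\<phi> ` U) n" "f' \<in> idems (\<phi> ` U) n" for e' f'
  proof -
    obtain e f where "e \<in> U" "f \<in> U" "e' = \<phi> e" "f' = \<phi> f" using ef idems_sub[OF U] by blast
    moreover hence "e \<in> idems U m" "f \<in> idems U m" using ef U idems_tr by auto
    moreover have "e \<in> S" "f \<in> S" using U calculation by auto
    ultimately show ?thesis using ad by (simp add: adequate_def hom')
  qed
  thus ?thesis using ad abundant_tr[OF U] by (simp add: adequate_def)
qed

lemma plus_tr: "U \<subseteq> S \<Longrightarrow> adequate U m \<Longrightarrow> a \<in> U \<Longrightarrow> plus (\<phi> ` U) n (\<phi> a) = \<phi> (plus U m a)"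
proof -
  assume U: "U \<subseteq> S" and ad: "adequate U m" and a: "a \<in> U"
  note P = plus_prop[OF ad a]
  have S: "a \<in> S" "plus U m a \<in> S" using P U a by (auto simp: idems_def)
  show ?thesis by (rule plus_eq[OF adequate_tr[OF U ad]]) (use P S U in \<open>simp_all add: idems_tr Rstar_tr\<close>)
qed

lemma astar_tr: "U \<subseteq> S \<Longrightarrow> adequate U m \<Longrightarrow> a \<in> U \<Longrightarrow> astar (\<phi> ` U) n (\<phi> a) = \<phi> (astar U m a)"
proof -
  assume U: "U \<subseteq> S" and ad: "adequate U m" and a: "a \<in> U"
  note P = astar_prop[OF ad a]
  have S: "a \<in> S" "astar U m a \<in> S" using P U a by (auto simp: idems_def)
  show ?thesis by (rule astar_eq[OF adequate_tr[OF U ad]]) (use P S U in \<open>simp_all add: idems_tr Lstar_tr\<close>)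
qed

lemma star_tr: "star_subsemigroup U S m \<Longrightarrow> star_subsemigroup (\<phi> ` U) (\<phi> ` S) n"
proof -
  assume st: "star_subsemigroup U S m"
  hence U: "U \<subseteq> S" by (simp add: star_subsemigroup_def)
  show ?thesis unfolding star_subsemigroup_def
  proof (intro conjI ballI)
    show "\<phi> ` U \<subseteq> \<phi> ` S" using U by blast
    show "abundant (\<phi> ` U) n" using abundant_tr[OF U] st by (simp add: star_subsemigroup_def)
    fix a' b' assume "a' \<in> \<phi> ` U" "b' \<in> \<phi> ` U"
    then obtain a b where ab: "a \<in> U" "b \<in> U" "a' = \<phi> a" "b' = \<phi> b" by blast
    hence S: "a \<in> S" "b \<in> S" using U by auto
    show "Lstar (\<phi> ` U) n a' b' = Lstar (\<phi> ` S) n a' b'"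
      using st ab S U by (simp add: Lstar_tr star_subsemigroup_def)
    show "Rstar (\<phi> ` U) n a' b' = Rstar (\<phi> ` S) n a' b'"
      using st ab S U by (simp add: Rstar_tr star_subsemigroup_def)
  qed
qed

lemma decomp_tr: "adequate S0 m \<Longrightarrow> S0 \<subseteq> S \<Longrightarrow> x \<in> S \<Longrightarrow> b \<in> S \<Longrightarrow> e \<in> S \<Longrightarrow> f \<in> S \<Longrightarrow>
   decomp (\<phi> ` S0) (\<phi> ` S) n (\<phi> x) (\<phi> b) (\<phi> e) (\<phi> f) = decomp S0 S m x b e f"
proof -
  assume ad: "adequate S0 m" and U: "S0 \<subseteq> S" and S: "x \<in> S" "b \<in> S" "e \<in> S" "f \<in> S"
  show ?thesis
  proof (cases "b \<in> S0")
    case True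
    have pS: "plus S0 m b \<in> S" "astar S0 m b \<in> S"
      using plus_prop[OF ad True] astar_prop[OF ad True] U by (auto simp: idems_def)
    show ?thesis unfolding decomp_def using True S pS U
      by (simp add: memp idems_tr plus_tr[OF U ad] astar_tr[OF U ad] GreenL_tr GreenR_tr hom' cl eqp)
  next
    case False
    thus ?thesis unfolding decomp_def using S U by (simp add: memp)
  qed
qed

lemma decomp_back: "S0 \<subseteq> S \<Longrightarrow> decomp (\<phi> ` S0) (\<phi> ` S) n x' y' e' f' \<Longrightarrow>
   \<exists>b e f. b \<in> S \<and> e \<in> S \<and> f \<in> S \<and> y' = \<phi> b \<and> e' = \<phi> e \<and> f' = \<phi> f"
  unfolding decomp_def idems_def by blast

lemma at_tr: "adequate_transversal S0 S m \<Longrightarrow> adequate_transversal (\<phi> ` S0) (\<phi> ` S) n"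
proof -
  assume at: "adequate_transversal S0 S m"
  have ad: "adequate S0 m" and st: "star_subsemigroup S0 S m" and ab: "abundant S m"
    using at by (auto simp: adequate_transversal_def)
  have U: "S0 \<subseteq> S" using st by (simp add: star_subsemigroup_def)
  have "\<exists>!xb'. \<exists>e' f'. decomp (\<phi> ` S0) (\<phi> ` S) n x' xb' e' f'" if xx: "x' \<in> \<phi> ` S" for x'
  proof -
    obtain x where x: "x \<in> S" "x' = \<phi> x" using xx by blast
    obtain b e f where d: "decomp S0 S m x b e f" using at x by (auto simp: adequate_transversal_def)
    have bef: "b \<in> S" "e \<in> S" "f \<in> S" using d U unfolding decomp_def idems_def by auto
    have ex: "decomp (\<phi> ` S0) (\<phi> ` S) n x' (\<phi> b) (\<phi> e) (\<phi> f)"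
      using decomp_tr[OF ad U x(1) bef] d x by simp
    have un: "y' = \<phi> b" if dd: "decomp (\<phi> ` S0) (\<phi> ` S) n x' y' e' f'" for y' e' f'
    proof -
      obtain b2 e2 f2 where b2: "b2 \<in> S" "e2 \<in> S" "f2 \<in> S" "y' = \<phi> b2" "e' = \<phi> e2" "f' = \<phi> f2"
        using decomp_back[OF U dd] by blast
      hence "decomp S0 S m x b2 e2 f2" using decomp_tr[OF ad U x(1) b2(1-3)] dd x by simp
      moreover have u: "\<exists>!xb. \<exists>e f. decomp S0 S m x xb e f" using at x(1) by (simp add: adequate_transversal_def)
      ultimately have "b2 = b" using d by blast
      thus ?thesis using b2 by simp
    qed
    show ?thesis using ex un by blast
  qed
  thus ?thesis unfolding adequate_transversal_def
    using abundant_tr[OF subset_refl ab] adequate_tr[OF U ad] star_tr[OF st] by simp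
qed

lemma qi_tr: "qi_adequate_transversal S0 S m \<Longrightarrow> qi_adequate_transversal (\<phi> ` S0) (\<phi> ` S) n"
proof -
  assume q: "qi_adequate_transversal S0 S m"
  hence at: "adequate_transversal S0 S m" by (simp add: qi_adequate_transversal_def)
  hence U: "S0 \<subseteq> S" by (simp add: adequate_transversal_def star_subsemigroup_def)
  have "n (n a' s') b' \<in> \<phi> ` S0" if asb: "a' \<in> \<phi> ` S0" "s' \<in> \<phi> ` S" "b' \<in> \<phi> ` S0" for a' s' b'
  proof -
    obtain a s b where "a \<in> S0" "s \<in> S" "b \<in> S0" "a' = \<phi> a" "s' = \<phi> s" "b' = \<phi> b" using asb by blast
    moreover hence "m (m a s) b \<in> S0" using q by (simp add: qi_adequate_transversal_def)
    moreover have "a \<in> S" "b \<in> S" using U calculation by auto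
    moreover have "n (n (\<phi> a) (\<phi> s)) (\<phi> b) = \<phi> (m (m a s) b)" using calculation by (simp add: hom' cl)
    ultimately show ?thesis by simp
  qed
  thus ?thesis using at_tr[OF at] by (simp add: qi_adequate_transversal_def)
qed

lemma inv_iso: "U \<subseteq> S \<Longrightarrow> sgrp U m \<Longrightarrow> sgrp_iso (inv_into S \<phi>) (\<phi> ` U) n U m"
proof -
  assume U: "U \<subseteq> S" and s: "sgrp U m"
  have iU: "inj_on \<phi> U" using inj U by (rule inj_on_subset)
  have "bij_betw \<phi> U (\<phi> ` U)" using iU by (simp add: bij_betw_def)
  hence b: "bij_betw (inv_into U \<phi>) (\<phi> ` U) U" by (rule bij_betw_inv_into)
  have iv: "inv_into S \<phi> (\<phi> x) = x" if "x \<in> S" for x using inv_into_f_f[OF inj that] .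
  have eq: "inv_into S \<phi> y = inv_into U \<phi> y" if yy: "y \<in> \<phi> ` U" for y
  proof -
    obtain x where x: "x \<in> U" "y = \<phi> x" using yy by blast
    have "x \<in> S" using x U by blast
    thus ?thesis using x iv inv_into_f_f[OF iU x(1)] by simp
  qed
  have "bij_betw (inv_into S \<phi>) (\<phi> ` U) U = bij_betw (inv_into U \<phi>) (\<phi> ` U) U"
    by (rule bij_betw_cong) (rule eq)
  hence b2: "bij_betw (inv_into S \<phi>) (\<phi> ` U) U" using b by simp
  show ?thesis unfolding sgrp_iso_def
  proof (intro conjI b2 ballI)
    fix x' y' assume "x' \<in> \<phi> ` U" "y' \<in> \<phi> ` U"
    then obtain x y where xy: "x \<in> U" "y \<in> U" "x' = \<phi> x" "y' = \<phi> y" by blast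
    have xyS: "x \<in> S" "y \<in> S" using xy U by auto
    have "m x y \<in> U" using s xy by (simp add: sgrp_def)
    hence "m x y \<in> S" using U by auto
    thus "inv_into S \<phi> (n x' y') = m (inv_into S \<phi> x') (inv_into S \<phi> y')"
      using xy xyS iv by (simp add: hom')
  qed
qed

end


theorem proposition2p7:
  fixes S S0 :: "'a set" and m :: "'a \<Rightarrow> 'a \<Rightarrow> 'a"
  assumes "abundant S m"
    and "qi_adequate_transversal S0 S m"
  shows "let bar = tbar S0 S m; e = te S0 S m; f = tf S0 S m;
             L = {x \<in> S. f x = f (bar x)};
             R = {x \<in> S. e x = e (bar x)};
             T = {(x, a). x \<in> L \<and> a \<in> R \<and> bar x = bar a};
             mT = (\<lambda>(x, a) (y, b). (m (m (e x) a) y, m (m a y) (f b)))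
         in L \<subseteq> S \<and> R \<subseteq> S \<and> left_adequate L m \<and> right_adequate R m \<and>
            sgrp T mT \<and> abundant T mT \<and>
            (\<exists>\<phi>. sgrp_iso \<phi> S m T mT) \<and>
            (\<exists>T0. T0 \<subseteq> T \<and> qi_adequate_transversal T0 T mT \<and>
                  (\<exists>\<psi>. sgrp_iso \<psi> T0 mT S0 m))"
proof -
  interpret q: qiat S S0 m using assms by unfold_locales
  have iso: "sgrp_iso q.phi S m q.Tset q.mT" by (rule q.phi_iso)
  interpret t: iso_tr q.phi S m q.mT
    using iso q.sg unfolding sgrp_iso_def bij_betw_def by unfold_locales auto
  have img: "q.phi ` S = q.Tset" by (rule q.phi_img)
  have S0S: "S0 \<subseteq> S" by (rule q.S0S)
  have sgT: "sgrp q.Tset q.mT" using t.sgrp_tr[OF subset_refl q.sg] img by simp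
  have abT: "abundant q.Tset q.mT" using t.abundant_tr[OF subset_refl assms(1)] img by simp
  have qiT: "qi_adequate_transversal (q.phi ` S0) q.Tset q.mT" using t.qi_tr[OF assms(2)] img by simp
  have psi: "sgrp_iso (inv_into S q.phi) (q.phi ` S0) q.mT S0 m" by (rule t.inv_iso[OF S0S q.sg0])
  have sub: "q.phi ` S0 \<subseteq> q.Tset" using img S0S by blast
  have LS: "q.Ls \<subseteq> S" "q.Rs \<subseteq> S" by auto
  show ?thesis unfolding Let_def
    using q.left_adeq q.right_adeq sgT abT iso qiT psi sub LS by blast
qed


end
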